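(* Let $G$ be a group and let $S_1,\dots,S_m\subset F$ be finitely many subsets such that each $S_i$ is a set of weak identities in $G$ of height $n_i$. Then $\bigcup_{i=1}^m S_i$ is a set of weak identities in $G$ of height at most $\sum_{i=1}^m n_i$ (i.e. the defining property holds with $N=\sum_i n_i$).
   Context: Let $F$ be the free group on countably many generators $g_1,g_2,\dots$. For $N\ge1$, $F^{\times N}$ is the direct product of $N$ copies of $F$, $i_k:F\to F^{\times N}$ the $k$-th inclusion. A subset $S\subset F$ is a set of weak identities in $G$ of height $N$ if for any $s_1,\dots,s_N\in S$ and any homomorphism $\rho:F^{\times N}\to G$ there is $k\in\{1,\dots,N\}$ with $\rho(i_k(s_k))=1$; $S$ is a set of weak identities if this holds for some $N\ge1$. *)

theory Defs
  imports "HOL-Algebra.Algebra"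
begin

text \<open>The free group F on countably many generators g_1, g_2, ... realised as
  freely reduced words over letters (i, b) :: nat \<times> bool; (i, True) stands for
  the generator g_i and (i, False) for its inverse.\<close>

type_synonym fword = "(nat \<times> bool) list"

definition letter_inv :: "nat \<times> bool \<Rightarrow> nat \<times> bool" where
  "letter_inv x = (fst x, \<not> snd x)"

definition reduced_word :: "fword \<Rightarrow> bool" where
  "reduced_word w \<longleftrightarrow> (\<forall>i. Suc i < length w \<longrightarrow> w ! Suc i \<noteq> letter_inv (w ! i))"

fun red_cons :: "nat \<times> bool \<Rightarrow> fword \<Rightarrow> fword" where
  "red_cons x [] = [x]"
| "red_cons x (y # ys) = (if y = letter_inv x then ys else x # y # ys)"

definition reduce_word :: "fword \<Rightarrow> fword" where
  "reduce_word w = foldr red_cons w []"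

definition free_group :: "fword monoid" where
  "free_group = \<lparr>carrier = {w. reduced_word w},
                 monoid.mult = (\<lambda>x y. reduce_word (x @ y)),
                 one = []\<rparr>"

definition free_power :: "nat \<Rightarrow> (nat \<Rightarrow> fword) monoid" where
  "free_power N = product_group {1..N} (\<lambda>_. free_group)"

definition incl :: "nat \<Rightarrow> nat \<Rightarrow> fword \<Rightarrow> (nat \<Rightarrow> fword)" where
  "incl N k s = (\<lambda>j\<in>{1..N}. if j = k then s else [])"

definition weak_identities_height :: "('g, 'c) monoid_scheme \<Rightarrow> fword set \<Rightarrow> nat \<Rightarrow> bool" where
  "weak_identities_height G S N \<longleftrightarrow> 1 \<le> N \<and>
     (\<forall>s. (\<forall>k\<in>{1..N}. s k \<in> S) \<longrightarrow>
        (\<forall>\<rho> \<in> hom (free_power N) G. \<exists>k\<in>{1..N}. \<rho> (incl N k (s k)) = \<one>\<^bsub>G\<^esub>))"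

end

theory Submission
  imports Defs
begin

definition embedF :: "nat \<Rightarrow> nat \<Rightarrow> (nat \<Rightarrow> nat) \<Rightarrow> (nat \<Rightarrow> fword) \<Rightarrow> (nat \<Rightarrow> fword)" where
  "embedF n N e f = (\<lambda>j\<in>{1..N}. if j \<in> e ` {1..n} then f (inv_into {1..n} e j) else [])"

lemma reduce_nil: "reduce_word [] = []"
  by (simp add: reduce_word_def)

lemma embedF_hom:
  assumes "inj_on e {1..n}" "e ` {1..n} \<subseteq> {1..N}"
  shows "embedF n N e \<in> hom (free_power n) (free_power N)"
proof (rule homI)
  fix f assume f: "f \<in> carrier (free_power n)"
  show "embedF n N e f \<in> carrier (free_power N)"
    using f by (auto simp: free_power_def embedF_def free_group_def reduced_word_def PiE_iff
        intro!: inv_into_into)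
next
  fix f g assume f: "f \<in> carrier (free_power n)" and g: "g \<in> carrier (free_power n)"
  show "embedF n N e (f \<otimes>\<^bsub>free_power n\<^esub> g) =
        embedF n N e f \<otimes>\<^bsub>free_power N\<^esub> embedF n N e g"
    using inv_into_into[of _ e "{1..n}"]
    by (auto simp: free_power_def embedF_def free_group_def reduce_nil fun_eq_iff)
qed

lemma embedF_incl:
  assumes "inj_on e {1..n}" "e ` {1..n} \<subseteq> {1..N}" "k \<in> {1..n}"
  shows "embedF n N e (incl n k x) = incl N (e k) x"
proof -
  have "\<And>j. j \<in> {1..n} \<Longrightarrow> inv_into {1..n} e (e j) = j"
    using assms(1) by (simp add: inv_into_f_f)
  then show ?thesis using assms
    by (auto simp: embedF_def incl_def fun_eq_iff intro!: inv_into_into)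
qed

theorem corollary2p3:
  fixes G :: "('g, 'c) monoid_scheme"
    and m :: nat
    and S :: "nat \<Rightarrow> fword set"
    and n :: "nat \<Rightarrow> nat"
  assumes "group G"
    and "1 \<le> m"
    and "\<And>i. i \<in> {1..m} \<Longrightarrow> S i \<subseteq> carrier free_group"
    and "\<And>i. i \<in> {1..m} \<Longrightarrow> weak_identities_height G (S i) (n i)"
  shows "weak_identities_height G (\<Union>i\<in>{1..m}. S i) (\<Sum>i=1..m. n i)"
proof -
  define N where "N = (\<Sum>i=1..m. n i)"
  have n1: "\<And>i. i \<in> {1..m} \<Longrightarrow> 1 \<le> n i"
    using assms(4) by (simp add: weak_identities_height_def)
  have "n 1 \<le> N" unfolding N_def
    by (rule member_le_sum) (use assms(2) in auto)
  then have N1: "1 \<le> N" using n1[of 1] assms(2) by auto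
  have main: "\<exists>k\<in>{1..N}. \<rho> (incl N k (s k)) = \<one>\<^bsub>G\<^esub>"
    if s: "\<forall>k\<in>{1..N}. s k \<in> (\<Union>i\<in>{1..m}. S i)" and rho: "\<rho> \<in> hom (free_power N) G" for s \<rho>
  proof -
    define A where "A i = {k\<in>{1..N}. s k \<in> S i}" for i
    have cov: "{1..N} = (\<Union>i\<in>{1..m}. A i)" using s by (auto simp: A_def)
    have "\<exists>i\<in>{1..m}. n i \<le> card (A i)"
    proof (rule ccontr)
      assume "\<not> ?thesis"
      then have lt: "\<And>i. i \<in> {1..m} \<Longrightarrow> card (A i) < n i" using not_le by blast
      have "N = card (\<Union>i\<in>{1..m}. A i)" using cov by (metis card_atLeastAtMost diff_Suc_1)
      also have "\<dots> \<le> (\<Sum>i=1..m. card (A i))"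
        by (rule card_UN_le) simp
      also have "\<dots> < (\<Sum>i=1..m. n i)"
        by (rule sum_strict_mono) (use lt assms(2) in auto)
      finally show False unfolding N_def by simp
    qed
    then obtain i where i: "i \<in> {1..m}" "n i \<le> card (A i)" by blast
    have "finite (A i)" by (simp add: A_def)
    then obtain e where e: "e ` {1..n i} \<subseteq> A i" "inj_on e {1..n i}"
      using card_le_inj[of "{1..n i}" "A i"] i(2) by auto
    have eN: "e ` {1..n i} \<subseteq> {1..N}" using e(1) by (auto simp: A_def)
    have hom1: "\<rho> \<circ> embedF (n i) N e \<in> hom (free_power (n i)) G"
      using hom_compose[OF embedF_hom[OF e(2) eN] rho] .
    have se: "\<forall>k\<in>{1..n i}. (\<lambda>k. s (e k)) k \<in> S i" using e(1) by (auto simp: A_def)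
    have wi: "\<forall>s. (\<forall>k\<in>{1..n i}. s k \<in> S i) \<longrightarrow>
        (\<forall>\<rho> \<in> hom (free_power (n i)) G. \<exists>k\<in>{1..n i}. \<rho> (incl (n i) k (s k)) = \<one>\<^bsub>G\<^esub>)"
      using assms(4)[OF i(1)] unfolding weak_identities_height_def by blast
    obtain k where k: "k \<in> {1..n i}"
      "(\<rho> \<circ> embedF (n i) N e) (incl (n i) k (s (e k))) = \<one>\<^bsub>G\<^esub>"
      using wi[rule_format, of "\<lambda>k. s (e k)", OF _ hom1] se by blast
    then have "\<rho> (incl N (e k) (s (e k))) = \<one>\<^bsub>G\<^esub>"
      using embedF_incl[OF e(2) eN k(1)] by simp
    moreover have "e k \<in> {1..N}" using eN k(1) by blast
    ultimately show ?thesis by blast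
  qed
  show ?thesis unfolding weak_identities_height_def N_def[symmetric]
    using N1 main by blast
qed

end
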